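(* Let $G_t(x,y)=\sum_{j\ge0}e^{-\lambda_j^2t}\phi_j(x)\phi_j(y)$ and $\Delta G_t(x,y)=-\sum_{j\ge0}\lambda_je^{-\lambda_j^2t}\phi_j(x)\phi_j(y)$ for $t>0$, $x,y\in\mathcal O$. Then for all $t>0$ and $x,z\in\mathcal O$, $$\int_{\mathcal O}|G_t(x,y)-G_t(z,y)|^2\,dy\le e^{-\lambda_1t}\sum_{j\ge0}\lambda_je^{-\lambda_j^2t}\,|x-z|^2,$$ and for every $\alpha\in(0,1)$ there is $C>0$ such that for all $t>0$, $x,z\in\mathcal O$, $$\int_{\mathcal O}|\Delta G_t(x,y)-\Delta G_t(z,y)|\,dy\le Ce^{-\frac{\lambda_1}{2}t}|x-z|^{\alpha}\Big(\sum_{j\ge0}\lambda_j^{2+\alpha}e^{-\lambda_j^2t}\Big)^{1/2}.$$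
   Context: $\mathcal O=(0,\pi)$; $\phi_0\equiv\pi^{-1/2}$, $\phi_j(x)=\sqrt{2/\pi}\cos(jx)$ for $j\ge1$, $\lambda_j=j^2$ (eigenpairs of the Neumann Laplacian on $\mathcal O$). *)

theory Defs
  imports "HOL-Analysis.Analysis"
begin

definition Odom :: "real set" where
  "Odom = {0<..<pi}"

text \<open>Neumann eigenfunctions on (0, pi).\<close>
definition phi :: "nat \<Rightarrow> real \<Rightarrow> real" where
  "phi j x = (if j = 0 then 1 / sqrt pi else sqrt (2 / pi) * cos (real j * x))"

definition lam :: "nat \<Rightarrow> real" where
  "lam j = (real j) ^ 2"

definition G :: "real \<Rightarrow> real \<Rightarrow> real \<Rightarrow> real" where
  "G t x y = (\<Sum>j. exp (- ((lam j)\<^sup>2 * t)) * phi j x * phi j y)"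

definition DeltaG :: "real \<Rightarrow> real \<Rightarrow> real \<Rightarrow> real" where
  "DeltaG t x y = - (\<Sum>j. lam j * exp (- ((lam j)\<^sup>2 * t)) * phi j x * phi j y)"

end

theory Submission
  imports Defs "HOL-Analysis.Analysis"
begin


lemma exp_ge_sq: assumes "(y::real) \<ge> 0" shows "y^2/4 \<le> exp y"
proof -
  have "y/2 \<le> exp (y/2)" using exp_ge_add_one_self[of "y/2"] by linarith
  hence "(y/2)^2 \<le> (exp (y/2))^2" using assms by (intro power_mono) auto
  also have "(exp (y/2))^2 = exp y" by (simp add: power2_eq_square flip: exp_add)
  finally show ?thesis by (simp add: power_divide)
qed

lemma summ_key: assumes "t > 0"
  shows "summable (\<lambda>j. lam j ^ 3 * exp (- ((lam j)\<^sup>2 * t)))"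
proof (rule summable_comparison_test'[where N=1])
  show "summable (\<lambda>n. (4 / t^2) * inverse (real n ^ 2))"
    by (intro summable_mult inverse_power_summable) auto
next
  fix n :: nat assume n: "n \<ge> 1"
  have y: "(real n ^ 4 * t)^2 / 4 \<le> exp (real n ^ 4 * t)"
    using assms by (intro exp_ge_sq) auto
  have pos: "real n > 0" using n by auto
  have "norm (lam n ^ 3 * exp (- ((lam n)\<^sup>2 * t))) = real n ^ 6 / exp (real n ^ 4 * t)"
    by (simp add: lam_def exp_minus field_simps flip: power_mult)
  also have "\<dots> \<le> real n ^ 6 / ((real n ^ 4 * t)^2 / 4)"
    using y pos assms by (intro divide_left_mono) auto
  also have "\<dots> = (4 / t^2) * inverse (real n ^ 2)"
    using pos assms apply (simp add: field_simps power2_eq_square)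
    by (simp add: eval_nat_numeral)
  finally show "norm (lam n ^ 3 * exp (- ((lam n)\<^sup>2 * t))) \<le> (4 / t^2) * inverse (real n ^ 2)" .
qed

lemma phi_bound: "\<bar>phi j y\<bar> \<le> 1"
proof -
  have pi1: "pi \<ge> 2" using pi_gt3 by linarith
  have "sqrt (2/pi) \<le> 1" using pi1 by (simp add: real_sqrt_le_1_iff)
  moreover have "1 / sqrt pi \<le> 1" using pi1 by (simp add: divide_le_eq)
  ultimately show ?thesis unfolding phi_def
    by (auto simp: abs_mult intro: mult_le_one)
qed

lemma cos_lip: "\<bar>cos (a::real) - cos b\<bar> \<le> \<bar>a - b\<bar>"
proof -
  have "\<bar>cos a - cos b\<bar> = 2 * \<bar>sin ((a+b)/2)\<bar> * \<bar>sin ((b-a)/2)\<bar>"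
    by (simp only: cos_diff_cos abs_mult)
  also have "\<dots> \<le> 2 * 1 * \<bar>(b-a)/2\<bar>"
    by (intro mult_left_mono mult_mono abs_sin_x_le_abs_x abs_sin_le_one) auto
  finally show ?thesis by simp
qed

lemma phi_diff1: "\<bar>phi j x - phi j z\<bar> \<le> real j * \<bar>x - z\<bar>"
proof (cases "j = 0")
  case True then show ?thesis by (simp add: phi_def)
next
  case False
  have pi1: "pi \<ge> 2" using pi_gt3 by linarith
  have s: "sqrt (2/pi) \<le> 1" using pi1 by (simp add: real_sqrt_le_1_iff)
  have "\<bar>phi j x - phi j z\<bar> = sqrt (2/pi) * \<bar>cos (real j * x) - cos (real j * z)\<bar>"
    using False by (simp add: phi_def abs_mult flip: right_diff_distrib)
  also have "\<dots> \<le> 1 * \<bar>real j * x - real j * z\<bar>"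
    using s by (intro mult_mono cos_lip) auto
  finally show ?thesis by (simp add: abs_mult flip: right_diff_distrib)
qed

lemma phi_diff2: "\<bar>phi j x - phi j z\<bar> \<le> 2"
  using phi_bound[of j x] phi_bound[of j z] by linarith

lemma phi_diffa: assumes "0 < \<alpha>" "\<alpha> \<le> 1"
  shows "\<bar>phi j x - phi j z\<bar> \<le> 2 * (real j * \<bar>x - z\<bar>) powr \<alpha>"
proof -
  define u where "u = real j * \<bar>x - z\<bar>"
  have u0: "u \<ge> 0" unfolding u_def by auto
  show ?thesis
  proof (cases "u \<ge> 1")
    case True
    have "1 \<le> u powr \<alpha>" using True assms by (simp add: ge_one_powr_ge_zero)
    then show ?thesis using phi_diff2[of j x z] unfolding u_def[symmetric] by linarith
  next
    case False
    have "u powr 1 \<le> u powr \<alpha>" by (rule powr_mono') (use False u0 assms in auto)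
    then have "u \<le> u powr \<alpha>" using u0 by (cases "u = 0") auto
    then show ?thesis using phi_diff1[of j x z] u0 unfolding u_def[symmetric] by linarith
  qed
qed



lemma int_cos: "integral {0..pi} (\<lambda>y. cos (real m * y)) = (if m = 0 then pi else 0)"
proof (cases "m = 0")
  case True then show ?thesis by simp
next
  case False
  have "((\<lambda>y. cos (real m * y)) has_integral (sin (real m * pi) / real m - sin (real m * 0) / real m)) {0..pi}"
  proof (rule fundamental_theorem_of_calculus)
    show "0 \<le> pi" by simp
    fix y assume "y \<in> {0..pi}"
    have "((\<lambda>y. sin (real m * y) / real m) has_real_derivative (cos (real m * y) * real m / real m)) (at y within {0..pi})"
      by (auto intro!: derivative_eq_intros)
    then show "((\<lambda>y. sin (real m * y) / real m) has_vector_derivative cos (real m * y)) (at y within {0..pi})"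
      using False by (simp add: has_real_derivative_iff_has_vector_derivative)
  qed
  then show ?thesis using False by (simp add: integral_unique sin_npi mult.commute[of _ pi])
qed

lemma int_cc: "integral {0..pi} (\<lambda>y. cos (real j * y) * cos (real k * y)) = (if j = k then pi/2 else 0) + (if j + k = 0 then pi / 2 else 0)"
proof -
  define d where "d = (if j \<le> k then k - j else j - k)"
  have e: "cos (real j * y) * cos (real k * y) = cos (real d * y) / 2 + cos (real (j+k) * y) / 2" for y
  proof -
    have "cos (real j * y - real k * y) = cos (real d * y)"
    proof (cases "j \<le> k")
      case True
      then have "real j * y - real k * y = - (real d * y)"
        unfolding d_def by (simp add: of_nat_diff algebra_simps)
      then show ?thesis by (simp only: cos_minus)
    next
      case False
      then have "real j * y - real k * y = real d * y"
        unfolding d_def by (simp add: of_nat_diff algebra_simps)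
      then show ?thesis by simp
    qed
    then show ?thesis by (simp add: cos_times_cos add_divide_distrib distrib_right)
  qed
  have "integral {0..pi} (\<lambda>y. cos (real j * y) * cos (real k * y)) =
        integral {0..pi} (\<lambda>y. cos (real d * y)) / 2 + integral {0..pi} (\<lambda>y. cos (real (j+k) * y)) / 2"
    unfolding e
    by (subst integral_add) (auto intro!: integrable_continuous_real continuous_intros)
  also have "\<dots> = (if j = k then pi/2 else 0) + (if j + k = 0 then pi / 2 else 0)"
    unfolding int_cos d_def by auto
  finally show ?thesis .
qed

lemma orth: "integral {0..pi} (\<lambda>y. phi j y * phi k y) = (if j = k then 1 else 0)"
proof -
  consider "j = 0" "k = 0" | "j = 0" "k \<noteq> 0" | "j \<noteq> 0" "k = 0" | "j \<noteq> 0" "k \<noteq> 0" by blast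
  then show ?thesis
  proof cases
    case 1 then show ?thesis by (simp add: phi_def)
  next
    case 2
    have e: "(\<lambda>y. phi j y * phi k y) = (\<lambda>y. (1 / sqrt pi * sqrt (2/pi)) * cos (real k * y))"
      using 2 by (simp add: phi_def)
    show ?thesis unfolding e integral_mult_right int_cos using 2 by simp
  next
    case 3
    have e: "(\<lambda>y. phi j y * phi k y) = (\<lambda>y. (1 / sqrt pi * sqrt (2/pi)) * cos (real j * y))"
      using 3 by (simp add: phi_def)
    show ?thesis unfolding e integral_mult_right int_cos using 3 by simp
  next
    case 4
    have e: "(\<lambda>y. phi j y * phi k y) = (\<lambda>y. (sqrt (2/pi) * sqrt (2/pi)) * (cos (real j * y) * cos (real k * y)))"
      using 4 by (simp add: phi_def mult_ac)
    have s: "sqrt (2/pi) * sqrt (2/pi) = 2 / pi" by simp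
    have c: "integral {0..pi} (\<lambda>y. cos (real j * y) * cos (real k * y)) = (if j = k then pi/2 else 0)"
      using 4 by (simp only: int_cc) simp
    show ?thesis unfolding e integral_mult_right c s by (cases "j = k") simp_all
  qed
qed

lemma phi_cont: "continuous_on S (phi j)"
proof (cases "j = 0")
  case True then show ?thesis by (simp add: phi_def[abs_def])
next
  case False then show ?thesis by (simp add: phi_def[abs_def]) (intro continuous_intros)
qed

lemma fin_pars: "integral {0..pi} (\<lambda>y. (\<Sum>j<n. c j * phi j y)^2) = (\<Sum>j<n. (c j)^2)"
proof -
  have e: "(\<lambda>y. (\<Sum>j<n. c j * phi j y)^2) = (\<lambda>y. \<Sum>i<n. \<Sum>j<n. (c i * c j) * (phi i y * phi j y))"
    by (auto simp: power2_eq_square sum_product mult_ac)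
  have int: "\<And>i j. (\<lambda>y. phi i y * phi j y) integrable_on {0..pi}"
    by (intro integrable_continuous_real continuous_on_mult phi_cont)
  have int2: "\<And>i. (\<lambda>y. \<Sum>j<n. (c i * c j) * (phi i y * phi j y)) integrable_on {0..pi}"
    by (intro integrable_continuous_real continuous_on_sum continuous_on_mult continuous_on_const phi_cont)
  have "integral {0..pi} (\<lambda>y. (\<Sum>j<n. c j * phi j y)^2) = (\<Sum>i<n. \<Sum>j<n. integral {0..pi} (\<lambda>y. (c i * c j) * (phi i y * phi j y)))"
    unfolding e
  proof (subst integral_sum[OF finite_lessThan], rule int2, intro sum.cong refl)
    fix i show "integral {0..pi} (\<lambda>y. \<Sum>j<n. c i * c j * (phi i y * phi j y)) =
       (\<Sum>j<n. integral {0..pi} (\<lambda>y. c i * c j * (phi i y * phi j y)))"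
      by (rule integral_sum[OF finite_lessThan]) (intro integrable_continuous_real continuous_on_mult continuous_on_const phi_cont)
  qed
  also have "\<dots> = (\<Sum>i<n. \<Sum>j<n. (c i * c j) * (if i = j then 1 else 0))"
    by (simp only: integral_mult_right orth)
  also have "\<dots> = (\<Sum>i<n. (c i)^2)"
  proof (intro sum.cong refl)
    fix i assume i: "i \<in> {..<n}"
    have "(\<Sum>j<n. (c i * c j) * (if i = j then 1 else 0)) = (\<Sum>j<n. (if i = j then c i * c i else 0))"
      by (intro sum.cong refl) auto
    also have "\<dots> = (c i)^2" using i by (simp add: power2_eq_square)
    finally show "(\<Sum>j<n. (c i * c j) * (if i = j then 1 else 0)) = (c i)^2" .
  qed
  finally show ?thesis .
qed



lemma inf_pars:
  assumes sa: "summable (\<lambda>j. \<bar>c j\<bar>)"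
  shows "(\<lambda>y. (\<Sum>j. c j * phi j y)^2) integrable_on {0..pi}"
    and "integral {0..pi} (\<lambda>y. (\<Sum>j. c j * phi j y)^2) = (\<Sum>j. (c j)^2)"
proof -
  define M where "M = (\<Sum>j. \<bar>c j\<bar>)"
  have tb: "\<bar>c j * phi j y\<bar> \<le> \<bar>c j\<bar>" for j y
    unfolding abs_mult by (rule mult_left_le) (auto simp: phi_bound)
  have sy: "summable (\<lambda>j. c j * phi j y)" for y
    by (rule summable_comparison_test'[where N=0, OF sa]) (simp add: tb)
  have cM: "\<bar>c j\<bar> \<le> M" for j
    using sum_le_suminf[OF sa, of "{j}"] unfolding M_def by simp
  have bnd: "\<bar>\<Sum>j<k. c j * phi j y\<bar> \<le> M" for k y
  proof -
    have "\<bar>\<Sum>j<k. c j * phi j y\<bar> \<le> (\<Sum>j<k. \<bar>c j * phi j y\<bar>)" by (rule sum_abs)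
    also have "\<dots> \<le> (\<Sum>j<k. \<bar>c j\<bar>)" by (intro sum_mono tb)
    also have "\<dots> \<le> M" unfolding M_def by (rule sum_le_suminf[OF sa]) auto
    finally show ?thesis .
  qed
  have fint: "(\<lambda>y. (\<Sum>j<k. c j * phi j y)^2) integrable_on {0..pi}" for k
    by (intro integrable_continuous_real continuous_intros phi_cont)
  have hint: "(\<lambda>y. M^2) integrable_on {0..pi}"
    by (intro integrable_continuous_real continuous_intros)
  have le: "norm ((\<Sum>j<k. c j * phi j y)^2) \<le> M^2" for k y
  proof -
    have "norm ((\<Sum>j<k. c j * phi j y)^2) = \<bar>\<Sum>j<k. c j * phi j y\<bar>^2" by simp
    also have "\<dots> \<le> M^2" by (rule power_mono[OF bnd]) simp
    finally show ?thesis .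
  qed
  have conv: "(\<lambda>k. (\<Sum>j<k. c j * phi j y)^2) \<longlonglongrightarrow> (\<Sum>j. c j * phi j y)^2" for y
    by (intro tendsto_power summable_LIMSEQ sy)
  note dc = dominated_convergence[OF fint hint le conv]
  show "(\<lambda>y. (\<Sum>j. c j * phi j y)^2) integrable_on {0..pi}" by (rule dc(1))
  have s2: "summable (\<lambda>j. (c j)^2)"
  proof (rule summable_comparison_test'[where N=0])
    show "summable (\<lambda>j. M * \<bar>c j\<bar>)" by (intro summable_mult sa)
    fix j :: nat
    have "norm ((c j)^2) = \<bar>c j\<bar> * \<bar>c j\<bar>" by (simp add: power2_eq_square abs_mult)
    also have "\<dots> \<le> M * \<bar>c j\<bar>" by (intro mult_right_mono cM) simp
    finally show "norm ((c j)^2) \<le> M * \<bar>c j\<bar>" .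
  qed
  have "(\<lambda>k. \<Sum>j<k. (c j)^2) \<longlonglongrightarrow> integral {0..pi} (\<lambda>y. (\<Sum>j. c j * phi j y)^2)"
    using dc(2) by (simp only: fin_pars)
  moreover have "(\<lambda>k. \<Sum>j<k. (c j)^2) \<longlonglongrightarrow> (\<Sum>j. (c j)^2)"
    by (rule summable_LIMSEQ[OF s2])
  ultimately show "integral {0..pi} (\<lambda>y. (\<Sum>j. c j * phi j y)^2) = (\<Sum>j. (c j)^2)"
    by (rule LIMSEQ_unique)
qed

lemma cs_bound:
  fixes f :: "real \<Rightarrow> real"
  assumes i1: "(\<lambda>y. \<bar>f y\<bar>) integrable_on {0..pi}"
    and i2: "(\<lambda>y. (f y)^2) integrable_on {0..pi}"
    and le: "integral {0..pi} (\<lambda>y. (f y)^2) \<le> B" and B: "B > 0"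
  shows "integral {0..pi} (\<lambda>y. \<bar>f y\<bar>) \<le> sqrt (pi * B)"
proof -
  define e where "e = sqrt (B / pi)"
  have e0: "e > 0" unfolding e_def using B by simp
  have e2: "e^2 = B / pi" unfolding e_def using B by simp
  have pw: "\<bar>f y\<bar> \<le> (f y)^2 / (2*e) + e/2" for y
  proof -
    have "0 \<le> (\<bar>f y\<bar> - e)^2" by simp
    hence "2 * e * \<bar>f y\<bar> \<le> (f y)^2 + e^2" by (simp add: power2_eq_square algebra_simps)
    thus ?thesis using e0 by (simp add: field_simps power2_eq_square)
  qed
  have hi: "((\<lambda>y. (f y)^2 / (2*e) + e/2) has_integral (integral {0..pi} (\<lambda>y. (f y)^2) / (2*e) + pi * (e/2))) {0..pi}"
  proof (rule has_integral_add)
    show "((\<lambda>y. (f y)^2 / (2*e)) has_integral integral {0..pi} (\<lambda>y. (f y)^2) / (2*e)) {0..pi}"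
      by (intro has_integral_divide integrable_integral i2)
    show "((\<lambda>y. e/2) has_integral pi * (e/2)) {0..pi}"
      using has_integral_const_real[of "e/2" 0 pi] by simp
  qed
  have "integral {0..pi} (\<lambda>y. \<bar>f y\<bar>) \<le> integral {0..pi} (\<lambda>y. (f y)^2 / (2*e) + e/2)"
    by (rule integral_le[OF i1]) (use hi pw in auto)
  also have "\<dots> = integral {0..pi} (\<lambda>y. (f y)^2) / (2*e) + pi * (e/2)"
    using hi by (rule integral_unique)
  also have "\<dots> \<le> B / (2*e) + pi * (e/2)"
    using le e0 by (simp add: divide_right_mono)
  also have "\<dots> = pi * e"
  proof -
    have "B = pi * e^2" using e2 by simp
    then show ?thesis using e0 by (simp add: field_simps power2_eq_square)
  qed
  also have "\<dots> = sqrt (pi * B)"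
  proof -
    have "(pi * e)^2 = pi^2 * e^2" by (simp add: power_mult_distrib)
    also have "\<dots> = pi * B" unfolding e2 by (simp add: power2_eq_square)
    finally have "(pi * e)^2 = pi * B" .
    then show ?thesis using e0 by (intro real_sqrt_unique[symmetric]) auto
  qed
  finally show ?thesis .
qed



lemma lint_conv:
  fixes g :: "real \<Rightarrow> real"
  assumes "set_integrable lborel Odom g"
  shows "(LINT y:Odom|lborel. g y) = integral {0..pi} g" "g integrable_on {0..pi}"
  using set_borel_integral_eq_integral[OF assms] unfolding Odom_def
  by (simp_all add: integral_open_interval_real integrable_on_Icc_iff_Ioo)

lemma lint_nonint:
  fixes g :: "real \<Rightarrow> real"
  assumes "\<not> set_integrable lborel Odom g"
  shows "(LINT y:Odom|lborel. g y) = 0"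
  using assms by (simp add: set_lebesgue_integral_def set_integrable_def not_integrable_integral_eq)

lemma lam_ge1: "j \<ge> 1 \<Longrightarrow> lam j \<ge> 1"
  unfolding lam_def by simp

lemma lam_nonneg: "lam j \<ge> 0"
  unfolding lam_def by simp

lemma summ_dom:
  assumes t: "t > 0" and b: "\<And>j. j \<ge> 1 \<Longrightarrow> \<bar>a j\<bar> \<le> K * (lam j ^ 3 * exp (- ((lam j)\<^sup>2 * t)))"
  shows "summable a"
  by (rule summable_comparison_test'[where N=1, OF summable_mult[OF summ_key[OF t]]]) (use b in simp)

lemma E_le: assumes "t > 0" "j \<ge> 1"
  shows "exp (- ((lam j)\<^sup>2 * t)) \<le> exp (- t)"
proof -
  have "1 \<le> (lam j)^2" using lam_ge1[OF assms(2)] by (simp add: one_le_power)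
  hence "t \<le> (lam j)^2 * t" using assms(1) by simp
  thus ?thesis by simp
qed

lemma lam_le3: "j \<ge> 1 \<Longrightarrow> lam j \<le> lam j ^ 3" "j \<ge> 1 \<Longrightarrow> 1 \<le> lam j ^ 3"
proof -
  assume j: "j \<ge> 1"
  have l: "1 \<le> lam j" using lam_ge1[OF j] .
  show "1 \<le> lam j ^ 3" using l by (simp add: one_le_power)
  have "lam j * 1 \<le> lam j * lam j ^ 2" using l by (intro mult_left_mono) (auto simp: one_le_power)
  thus "lam j \<le> lam j ^ 3" by (simp add: power_numeral_reduce)
qed

lemma part1:
  assumes t: "t > 0"
  shows "(LINT y:Odom|lborel. (G t x y - G t z y)\<^sup>2)
              \<le> exp (- (lam 1 * t)) * (\<Sum>j. lam j * exp (- ((lam j)\<^sup>2 * t))) * \<bar>x - z\<bar>\<^sup>2"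
proof -
  define E where "E j = exp (- ((lam j)\<^sup>2 * t))" for j
  define c where "c j = E j * (phi j x - phi j z)" for j
  define K where "K = exp (- t) * \<bar>x - z\<bar>\<^sup>2"
  have E0: "E j > 0" for j unfolding E_def by simp
  have sG: "summable (\<lambda>j. E j * phi j w * phi j y)" for w y
  proof (rule summ_dom[OF t, where K=1])
    fix j :: nat assume j: "j \<ge> 1"
    have "\<bar>E j * phi j w * phi j y\<bar> \<le> E j * 1 * 1"
      unfolding abs_mult using E0[of j] by (intro mult_mono phi_bound) auto
    also have "\<dots> \<le> lam j ^ 3 * E j" using lam_le3(2)[OF j] E0[of j] by simp
    finally show "\<bar>E j * phi j w * phi j y\<bar> \<le> 1 * (lam j ^ 3 * exp (- ((lam j)\<^sup>2 * t)))"
      by (simp add: E_def)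
  qed
  have eqG: "G t x y - G t z y = (\<Sum>j. c j * phi j y)" for y
  proof -
    have "G t x y - G t z y = (\<Sum>j. E j * phi j x * phi j y - E j * phi j z * phi j y)"
      unfolding G_def E_def[symmetric] by (rule suminf_diff) (rule sG)+
    also have "\<dots> = (\<Sum>j. c j * phi j y)" unfolding c_def by (simp add: algebra_simps)
    finally show ?thesis .
  qed
  have sc: "summable (\<lambda>j. \<bar>c j\<bar>)"
  proof (rule summ_dom[OF t, where K=2])
    fix j :: nat assume j: "j \<ge> 1"
    have "\<bar>\<bar>c j\<bar>\<bar> \<le> E j * 2" unfolding c_def abs_abs abs_mult
      using E0[of j] by (intro mult_mono phi_diff2) auto
    also have "\<dots> \<le> 2 * (lam j ^ 3 * E j)" using lam_le3(2)[OF j] E0[of j] by simp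
    finally show "\<bar>\<bar>c j\<bar>\<bar> \<le> 2 * (lam j ^ 3 * exp (- ((lam j)\<^sup>2 * t)))" by (simp add: E_def)
  qed
  have sL: "summable (\<lambda>j. lam j * E j)"
  proof (rule summ_dom[OF t, where K=1])
    fix j :: nat assume j: "j \<ge> 1"
    show "\<bar>lam j * E j\<bar> \<le> 1 * (lam j ^ 3 * exp (- ((lam j)\<^sup>2 * t)))"
      using lam_le3(1)[OF j] E0[of j] lam_nonneg[of j] by (simp add: E_def abs_mult mult_right_mono)
  qed
  have tb: "(c j)^2 \<le> K * (lam j * E j)" for j
  proof (cases "j = 0")
    case True then show ?thesis by (simp add: c_def phi_def lam_def)
  next
    case False
    then have j: "j \<ge> 1" by simp
    have d: "(phi j x - phi j z)^2 \<le> lam j * \<bar>x - z\<bar>^2"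
    proof -
      have "(phi j x - phi j z)^2 = \<bar>phi j x - phi j z\<bar>^2" by simp
      also have "\<dots> \<le> (real j * \<bar>x - z\<bar>)^2" by (rule power_mono[OF phi_diff1]) simp
      finally show ?thesis by (simp add: lam_def power_mult_distrib)
    qed
    have "(c j)^2 = E j * E j * (phi j x - phi j z)^2" unfolding c_def by (simp add: power2_eq_square)
    also have "\<dots> \<le> E j * exp (- t) * (lam j * \<bar>x - z\<bar>^2)"
      using E_le[OF t j] E0[of j] d by (intro mult_mono mult_left_mono) (auto simp: E_def)
    also have "\<dots> = K * (lam j * E j)" unfolding K_def by (simp add: mult_ac)
    finally show ?thesis .
  qed
  have K0: "K \<ge> 0" unfolding K_def by simp
  have s2: "summable (\<lambda>j. (c j)^2)"
    by (rule summable_comparison_test'[where N=0, OF summable_mult[OF sL, of K]]) (use tb in simp)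
  have "(\<Sum>j. (c j)^2) \<le> (\<Sum>j. K * (lam j * E j))"
    by (rule suminf_le[OF tb s2 summable_mult[OF sL]])
  also have "\<dots> = K * (\<Sum>j. lam j * E j)" by (rule suminf_mult[OF sL])
  finally have main: "(\<Sum>j. (c j)^2) \<le> K * (\<Sum>j. lam j * E j)" .
  have rhs: "exp (- (lam 1 * t)) * (\<Sum>j. lam j * exp (- ((lam j)\<^sup>2 * t))) * \<bar>x - z\<bar>\<^sup>2 = K * (\<Sum>j. lam j * E j)"
    unfolding K_def E_def by (simp add: lam_def mult_ac)
  have Sn: "0 \<le> (\<Sum>j. lam j * E j)"
    by (rule suminf_nonneg[OF sL]) (simp add: E0 lam_nonneg less_imp_le)
  show ?thesis
  proof (cases "set_integrable lborel Odom (\<lambda>y. (G t x y - G t z y)\<^sup>2)")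
    case True
    have "(LINT y:Odom|lborel. (G t x y - G t z y)\<^sup>2) = integral {0..pi} (\<lambda>y. (G t x y - G t z y)\<^sup>2)"
      by (rule lint_conv(1)[OF True])
    also have "\<dots> = (\<Sum>j. (c j)^2)" unfolding eqG by (rule inf_pars(2)[OF sc])
    finally show ?thesis using main rhs by simp
  next
    case False
    then show ?thesis unfolding lint_nonint[OF False] rhs using K0 Sn by simp
  qed
qed



lemma lam_powr_eq:
  assumes j: "j \<ge> 1"
  shows "(lam j)^2 * (real j powr a)^2 = lam j powr (2 + a)"
proof -
  have jp: "real j > 0" using j by simp
  have "lam j powr (2 + a) = lam j powr 2 * lam j powr a"
    using jp by (simp add: powr_add lam_def)
  also have "lam j powr 2 = (lam j)^2" using jp by (simp add: lam_def)
  also have "lam j powr a = (real j powr a)^2"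
    unfolding lam_def power2_eq_square by (simp add: powr_mult)
  finally show ?thesis by simp
qed

lemma part2:
  assumes t: "t > 0" and a: "0 < \<alpha>" "\<alpha> < 1"
  shows "(LINT y:Odom|lborel. \<bar>DeltaG t x y - DeltaG t z y\<bar>)
                 \<le> 4 * exp (- (lam 1 / 2 * t)) * \<bar>x - z\<bar> powr \<alpha>
                   * sqrt (\<Sum>j. lam j powr (2 + \<alpha>) * exp (- ((lam j)\<^sup>2 * t)))"
proof -
  define E where "E j = exp (- ((lam j)\<^sup>2 * t))" for j
  define c where "c j = lam j * E j * (phi j x - phi j z)" for j
  define P where "P = \<bar>x - z\<bar> powr \<alpha>"
  define K where "K = (2 * exp (- t / 2) * P)^2"
  define S where "S = (\<Sum>j. lam j powr (2 + \<alpha>) * E j)"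
  have E0: "E j > 0" for j unfolding E_def by simp
  have sG: "summable (\<lambda>j. lam j * E j * phi j w * phi j y)" for w y
  proof (rule summ_dom[OF t, where K=1])
    fix j :: nat assume j: "j \<ge> 1"
    have "\<bar>lam j * E j * phi j w * phi j y\<bar> \<le> lam j * E j * 1 * 1"
      unfolding abs_mult using E0[of j] lam_nonneg[of j] by (intro mult_mono phi_bound) auto
    also have "\<dots> \<le> lam j ^ 3 * E j" using lam_le3(1)[OF j] E0[of j] by simp
    finally show "\<bar>lam j * E j * phi j w * phi j y\<bar> \<le> 1 * (lam j ^ 3 * exp (- ((lam j)\<^sup>2 * t)))"
      by (simp add: E_def)
  qed
  have eqD: "\<bar>DeltaG t x y - DeltaG t z y\<bar> = \<bar>\<Sum>j. c j * phi j y\<bar>" for y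
  proof -
    have "DeltaG t x y - DeltaG t z y = - ((\<Sum>j. lam j * E j * phi j x * phi j y) - (\<Sum>j. lam j * E j * phi j z * phi j y))"
      unfolding DeltaG_def E_def by simp
    also have "(\<Sum>j. lam j * E j * phi j x * phi j y) - (\<Sum>j. lam j * E j * phi j z * phi j y) = 
       (\<Sum>j. lam j * E j * phi j x * phi j y - lam j * E j * phi j z * phi j y)"
      by (rule suminf_diff) (rule sG)+
    also have "\<dots> = (\<Sum>j. c j * phi j y)" unfolding c_def by (simp add: algebra_simps)
    finally show ?thesis by simp
  qed
  have sc: "summable (\<lambda>j. \<bar>c j\<bar>)"
  proof (rule summ_dom[OF t, where K=2])
    fix j :: nat assume j: "j \<ge> 1"
    have "\<bar>\<bar>c j\<bar>\<bar> \<le> lam j * E j * 2" unfolding c_def abs_abs abs_mult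
      using E0[of j] lam_nonneg[of j] by (intro mult_mono phi_diff2) auto
    also have "\<dots> \<le> 2 * (lam j ^ 3 * E j)" using lam_le3(1)[OF j] E0[of j] by simp
    finally show "\<bar>\<bar>c j\<bar>\<bar> \<le> 2 * (lam j ^ 3 * exp (- ((lam j)\<^sup>2 * t)))" by (simp add: E_def)
  qed
  have sL: "summable (\<lambda>j. lam j powr (2 + \<alpha>) * E j)"
  proof (rule summ_dom[OF t, where K=1])
    fix j :: nat assume j: "j \<ge> 1"
    have l1: "1 \<le> lam j" by (rule lam_ge1[OF j])
    have "lam j powr (2 + \<alpha>) \<le> lam j powr (3::real)"
      using a l1 by (intro powr_mono) auto
    also have "lam j powr (3::real) = lam j ^ 3" using l1 by (simp add: powr_numeral)
    finally have "lam j powr (2 + \<alpha>) \<le> lam j ^ 3" .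
    then show "\<bar>lam j powr (2 + \<alpha>) * E j\<bar> \<le> 1 * (lam j ^ 3 * exp (- ((lam j)\<^sup>2 * t)))"
      using E0[of j] by (simp add: E_def abs_mult mult_right_mono)
  qed
  have tb: "(c j)^2 \<le> K * (lam j powr (2 + \<alpha>) * E j)" for j
  proof (cases "j = 0")
    case True then show ?thesis by (simp add: c_def phi_def lam_def)
  next
    case False
    then have j: "j \<ge> 1" by simp
    have d: "(phi j x - phi j z)^2 \<le> 4 * (real j powr \<alpha>)^2 * P^2"
    proof -
      have "(phi j x - phi j z)^2 = \<bar>phi j x - phi j z\<bar>^2" by simp
      also have "\<dots> \<le> (2 * (real j * \<bar>x - z\<bar>) powr \<alpha>)^2"
        by (rule power_mono[OF phi_diffa]) (use a in auto)
      also have "\<dots> = 4 * (real j powr \<alpha>)^2 * P^2"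
        unfolding P_def by (simp add: powr_mult power_mult_distrib)
      finally show ?thesis .
    qed
    have ee: "exp (- t) = (exp (- t / 2))^2"
      by (simp add: power2_eq_square flip: exp_add)
    have "(c j)^2 = (lam j)^2 * (E j * E j) * (phi j x - phi j z)^2"
      unfolding c_def by (simp add: power2_eq_square mult_ac)
    also have "\<dots> \<le> (lam j)^2 * (E j * exp (- t)) * (4 * (real j powr \<alpha>)^2 * P^2)"
      using E_le[OF t j] E0[of j] d by (intro mult_mono mult_left_mono) (auto simp: E_def)
    also have "\<dots> = (4 * exp (- t) * P^2) * (((lam j)^2 * (real j powr \<alpha>)^2) * E j)"
      by (simp add: mult_ac)
    also have "\<dots> = K * (lam j powr (2 + \<alpha>) * E j)"
      unfolding lam_powr_eq[OF j] K_def ee by (simp add: power_mult_distrib)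
    finally show ?thesis .
  qed
  have K0: "K \<ge> 0" unfolding K_def by simp
  have s2: "summable (\<lambda>j. (c j)^2)"
    by (rule summable_comparison_test'[where N=0, OF summable_mult[OF sL, of K]]) (use tb in simp)
  have "(\<Sum>j. (c j)^2) \<le> (\<Sum>j. K * (lam j powr (2 + \<alpha>) * E j))"
    by (rule suminf_le[OF tb s2 summable_mult[OF sL]])
  also have "\<dots> = K * S" unfolding S_def by (rule suminf_mult[OF sL])
  finally have main: "(\<Sum>j. (c j)^2) \<le> K * S" .
  have Spos: "S > 0" unfolding S_def
    by (rule suminf_pos2[OF sL, where i=1]) (auto simp: E0 lam_nonneg less_imp_le lam_def)
  have rhs: "4 * exp (- (lam 1 / 2 * t)) * \<bar>x - z\<bar> powr \<alpha>
                   * sqrt (\<Sum>j. lam j powr (2 + \<alpha>) * exp (- ((lam j)\<^sup>2 * t))) = 4 * exp (- t / 2) * P * sqrt S"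
    unfolding P_def S_def E_def by (simp add: lam_def)
  have rhs0: "0 \<le> 4 * exp (- t / 2) * P * sqrt S" unfolding P_def using Spos by simp
  show ?thesis
  proof (cases "x = z")
    case True
    then show ?thesis unfolding rhs using rhs0 by simp
  next
    case False
    have Ppos: "P > 0" unfolding P_def using False by simp
    have Kpos: "K > 0" unfolding K_def using Ppos by simp
    show ?thesis
    proof (cases "set_integrable lborel Odom (\<lambda>y. \<bar>DeltaG t x y - DeltaG t z y\<bar>)")
      case True
      have fe: "(\<lambda>y. \<bar>DeltaG t x y - DeltaG t z y\<bar>) = (\<lambda>y. \<bar>\<Sum>j. c j * phi j y\<bar>)"
        using eqD by auto
      have "(LINT y:Odom|lborel. \<bar>DeltaG t x y - DeltaG t z y\<bar>) = integral {0..pi} (\<lambda>y. \<bar>\<Sum>j. c j * phi j y\<bar>)"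
        using lint_conv(1)[OF True] unfolding fe .
      also have "\<dots> \<le> sqrt (pi * (K * S))"
      proof (rule cs_bound)
        show "(\<lambda>y. \<bar>\<Sum>j. c j * phi j y\<bar>) integrable_on {0..pi}"
          using lint_conv(2)[OF True] unfolding fe .
        show "(\<lambda>y. (\<Sum>j. c j * phi j y)^2) integrable_on {0..pi}" by (rule inf_pars(1)[OF sc])
        show "integral {0..pi} (\<lambda>y. (\<Sum>j. c j * phi j y)^2) \<le> K * S"
          unfolding inf_pars(2)[OF sc] by (rule main)
        show "K * S > 0" using Kpos Spos by simp
      qed
      also have "\<dots> = sqrt pi * (2 * exp (- t / 2) * P) * sqrt S"
        unfolding K_def using Ppos by (simp add: real_sqrt_mult)
      also have "\<dots> \<le> 2 * (2 * exp (- t / 2) * P) * sqrt S"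
      proof -
        have "sqrt pi \<le> sqrt ((2::real)^2)" using pi_less_4 by (intro real_sqrt_le_mono) simp
        hence "sqrt pi \<le> 2" by (simp only: real_sqrt_abs abs_numeral)
        thus ?thesis using Ppos Spos by (intro mult_right_mono) auto
      qed
      also have "\<dots> = 4 * exp (- t / 2) * P * sqrt S" by simp
      finally show ?thesis unfolding rhs .
    next
      case False
      then show ?thesis unfolding lint_nonint[OF False] rhs using rhs0 by simp
    qed
  qed
qed

theorem lemma3p1:
  shows "(\<forall>t>0. \<forall>x\<in>Odom. \<forall>z\<in>Odom.
            (LINT y:Odom|lborel. (G t x y - G t z y)\<^sup>2)
              \<le> exp (- (lam 1 * t)) * (\<Sum>j. lam j * exp (- ((lam j)\<^sup>2 * t))) * \<bar>x - z\<bar>\<^sup>2)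
       \<and> (\<forall>\<alpha>::real. 0 < \<alpha> \<and> \<alpha> < 1 \<longrightarrow>
            (\<exists>C>0. \<forall>t>0. \<forall>x\<in>Odom. \<forall>z\<in>Odom.
               (LINT y:Odom|lborel. \<bar>DeltaG t x y - DeltaG t z y\<bar>)
                 \<le> C * exp (- (lam 1 / 2 * t)) * \<bar>x - z\<bar> powr \<alpha>
                   * sqrt (\<Sum>j. lam j powr (2 + \<alpha>) * exp (- ((lam j)\<^sup>2 * t)))))"
proof (intro conjI allI impI ballI)
  fix t x z :: real assume "t > 0"
  then show "(LINT y:Odom|lborel. (G t x y - G t z y)\<^sup>2)
              \<le> exp (- (lam 1 * t)) * (\<Sum>j. lam j * exp (- ((lam j)\<^sup>2 * t))) * \<bar>x - z\<bar>\<^sup>2"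
    by (rule part1)
next
  fix \<alpha> :: real assume a: "0 < \<alpha> \<and> \<alpha> < 1"
  show "\<exists>C>0. \<forall>t>0. \<forall>x\<in>Odom. \<forall>z\<in>Odom.
               (LINT y:Odom|lborel. \<bar>DeltaG t x y - DeltaG t z y\<bar>)
                 \<le> C * exp (- (lam 1 / 2 * t)) * \<bar>x - z\<bar> powr \<alpha>
                   * sqrt (\<Sum>j. lam j powr (2 + \<alpha>) * exp (- ((lam j)\<^sup>2 * t)))"
    by (rule exI[where x=4]) (use a part2 in auto)
qed

end
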